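(* Let $k$ be a positive integer and suppose $\mathbb{Q}^{\beth_\omega}$ is coloured with $k$ colours. Then there is an infinite set $X\subset\mathbb{Q}^{\beth_\omega}$ such that the sumset $X+X=\{x+y: x,y\in X\}$ is monochromatic.
   Context: $\beth_\omega=\sup\{\aleph_0,2^{\aleph_0},2^{2^{\aleph_0}},\dots\}$. $\mathbb{Q}^{\beth_\omega}$ denotes the rational vector space of dimension $\beth_\omega$ (the direct sum of $\beth_\omega$ copies of $\mathbb{Q}$). A $k$-colouring is an arbitrary function to a set of $k$ colours. Note that $X+X$ includes sums $x+x$ with $x\in X$. *)

theory Defs
  imports Complex_Main "HOL-Library.Poly_Mapping"
begin

unbundle cardinal_syntax

text \<open>beth n is |Pow^n(nat)|.  A set A has cardinality beth_omega = sup_n beth_n iff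
  it is the union of a sequence of sets S n with |S n| = beth n; i.e.
  |S 0| = |nat| and |S (n+1)| = |Pow (S n)|.\<close>

definition beth_omega_sized :: "'a set \<Rightarrow> bool" where
  "beth_omega_sized A \<longleftrightarrow>
     (\<exists>S :: nat \<Rightarrow> 'a set.
        card_of (S 0) =o card_of (UNIV :: nat set) \<and>
        (\<forall>n. card_of (S (Suc n)) =o card_of (Pow (S n))) \<and>
        A = (\<Union>n. S n))"

end

theory Submission
  imports Defs
begin


locale wo = fixes r :: "'a rel" assumes WO: "Well_order r" and FLD: "Field r = UNIV"
begin
definition lt :: "'a \<Rightarrow> 'a \<Rightarrow> bool" (infix "\<prec>" 50) where "a \<prec> b \<longleftrightarrow> (a,b) \<in> r \<and> a \<noteq> b"
lemma rrefl: "(a,a) \<in> r" using wo_rel.REFL[of r] WO FLD unfolding wo_rel_def refl_on_def by auto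
lemma rtotal: "(a,b) \<in> r \<or> (b,a) \<in> r" using wo_rel.TOTALS[of r] WO FLD unfolding wo_rel_def by auto
lemma rantisym: "(a,b) \<in> r \<Longrightarrow> (b,a) \<in> r \<Longrightarrow> a = b" using wo_rel.ANTISYM[of r] WO unfolding wo_rel_def antisym_def by auto
lemma rtrans: "(a,b) \<in> r \<Longrightarrow> (b,c) \<in> r \<Longrightarrow> (a,c) \<in> r" using wo_rel.TRANS[of r] WO unfolding wo_rel_def trans_def by blast
lemma rwf: "wf (r - Id)" using wo_rel.WF[of r] WO unfolding wo_rel_def by auto
lemma lt_irrefl: "\<not> a \<prec> a" by (simp add: lt_def)
lemma lt_trans: "a \<prec> b \<Longrightarrow> b \<prec> c \<Longrightarrow> a \<prec> c" unfolding lt_def using rtrans rantisym by blast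
lemma lt_linear: "a \<noteq> b \<Longrightarrow> a \<prec> b \<or> b \<prec> a" unfolding lt_def using rtotal by blast
lemma lt_asym: "a \<prec> b \<Longrightarrow> \<not> b \<prec> a" unfolding lt_def using rantisym by blast
lemma lt_not: "\<not> a \<prec> b \<Longrightarrow> b = a \<or> b \<prec> a" using lt_linear by blast
lemma lt_r: "a \<prec> b \<Longrightarrow> (a,b) \<in> r" by (simp add: lt_def)
lemma r_lt: "(a,b) \<in> r \<longleftrightarrow> a = b \<or> a \<prec> b" unfolding lt_def using rrefl by blast
lemma ltwf: "(x, y) \<in> r - Id \<longleftrightarrow> x \<prec> y" by (auto simp: lt_def)
lemma lt_induct: assumes "\<And>y. (\<And>z. z \<prec> y \<Longrightarrow> P z) \<Longrightarrow> P y" shows "P x"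
  using wf_induct[OF rwf, of P x] assms unfolding ltwf by blast
lemma ex_min: assumes "x \<in> A" shows "\<exists>a\<in>A. \<forall>b\<in>A. \<not> b \<prec> a"
proof -
  have "\<exists>z\<in>A. \<forall>y. (y, z) \<in> r - Id \<longrightarrow> y \<notin> A" using wfE_min[OF rwf assms] by blast
  then show ?thesis unfolding lt_def by blast
qed
lemma ex_max: "finite A \<Longrightarrow> A \<noteq> {} \<Longrightarrow> \<exists>a\<in>A. \<forall>b\<in>A. b \<noteq> a \<longrightarrow> b \<prec> a"
proof (induction A rule: finite_induct)
  case (insert x F)
  show ?case
  proof (cases "F = {}")
    case True then show ?thesis by auto
  next
    case False
    then obtain a where a: "a \<in> F" "\<forall>b\<in>F. b \<noteq> a \<longrightarrow> b \<prec> a" using insert by auto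
    show ?thesis
    proof (cases "x \<prec> a")
      case True then show ?thesis using a by auto
    next
      case False then have "a \<prec> x \<or> a = x" using lt_not by blast
      then show ?thesis using a insert(2) lt_trans by (metis insertE insertI1)
    qed
  qed
qed simp
end



lemma ordLeq_M: "\<not> finite M \<Longrightarrow> |A| \<le>o |M| \<Longrightarrow> |B| \<le>o |M| \<Longrightarrow> |A \<times> B| \<le>o |M|"
  using card_of_Times_ordLeq_infinite_Field[of "|M|" A B] by (simp add: Field_card_of card_of_Card_order card_of_card_order_on)

lemma ordLeq_M_Plus: "\<not> finite M \<Longrightarrow> |A| \<le>o |M| \<Longrightarrow> |B| \<le>o |M| \<Longrightarrow> |A <+> B| \<le>o |M|"
  using card_of_Plus_ordLeq_infinite_Field[of "|M|" A B] by (simp add: Field_card_of card_of_Card_order card_of_card_order_on)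

lemma ordLeq_M_Un: "\<not> finite M \<Longrightarrow> |A| \<le>o |M| \<Longrightarrow> |B| \<le>o |M| \<Longrightarrow> |A \<union> B| \<le>o |M|"
  using card_of_Un_ordLeq_infinite_Field[of "|M|" A B] by (simp add: Field_card_of card_of_Card_order card_of_card_order_on)

lemma fin_subsets_le:
  assumes inf: "\<not> finite M"
  shows "|{u. u \<subseteq> M \<and> finite u}| \<le>o |M|"
proof -
  define F where "F j = {u. u \<subseteq> M \<and> finite u \<and> card u = j}" for j
  have Fle: "|F j| \<le>o |M|" for j
  proof (induction j)
    case 0
    have "F 0 = {{}}" unfolding F_def by auto
    moreover have "M \<noteq> {}" using inf by auto
    ultimately show ?case using card_of_singl_ordLeq by metis
  next
    case (Suc j)
    have "F (Suc j) \<subseteq> (\<lambda>(u,m). insert m u) ` (F j \<times> M)"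
    proof
      fix u assume "u \<in> F (Suc j)"
      then have u: "u \<subseteq> M" "finite u" "card u = Suc j" by (auto simp: F_def)
      then obtain m where m: "m \<in> u" by (metis card.empty ex_in_conv nat.distinct(1))
      have "u - {m} \<in> F j" using u m by (auto simp: F_def)
      moreover have "u = insert m (u - {m})" using m by auto
      ultimately show "u \<in> (\<lambda>(u,m). insert m u) ` (F j \<times> M)" using m u(1)
        by (intro image_eqI[where x="(u - {m}, m)"]) auto
    qed
    then have "|F (Suc j)| \<le>o |F j \<times> M|" by (rule surj_imp_ordLeq)
    also have "|F j \<times> M| \<le>o |M|" using ordLeq_M[OF inf Suc card_of_mono1[of M M]]
      by simp
    finally show ?case .
  qed
  have "{u. u \<subseteq> M \<and> finite u} = (\<Union>j\<in>UNIV. F j)" by (auto simp: F_def)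
  moreover have "|\<Union>j\<in>(UNIV::nat set). F j| \<le>o |M|"
    using card_of_UNION_ordLeq_infinite[OF inf] Fle inf infinite_iff_card_of_nat by blast
  ultimately show ?thesis by simp
qed

lemma pow_le: assumes "|A| \<le>o |B|" shows "|Pow A| \<le>o |Pow B|"
proof -
  obtain g where g: "inj_on g A" "g ` A \<subseteq> B" using assms card_of_ordLeq by metis
  have "inj_on (image g) (Pow A)" using g(1) by (auto simp: inj_on_def inj_on_image_eq_iff)
  moreover have "image g ` Pow A \<subseteq> Pow B" using g(2) by auto
  ultimately show ?thesis using card_of_ordLeq by metis
qed

lemma pow_times_le: "|Pow A \<times> Pow B| \<le>o |Pow (A <+> B)|"
proof -
  have "inj_on (\<lambda>(P,Q). Inl ` P \<union> Inr ` Q) (Pow A \<times> Pow B)"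
    by (auto simp: inj_on_def)
  moreover have "(\<lambda>(P,Q). Inl ` P \<union> Inr ` Q) ` (Pow A \<times> Pow B) \<subseteq> Pow (A <+> B)" by auto
  ultimately show ?thesis using card_of_ordLeq by metis
qed

lemma code_space_le:
  assumes inf: "\<not> finite M"
  shows "|Pow (M \<times> M) \<times> Pow ({u. u \<subseteq> M \<and> finite u} \<times> (UNIV::nat set))| \<le>o |Pow M|"
proof -
  have MM: "|M| \<le>o |M|" by (rule card_of_mono1) simp
  have a: "|M \<times> M| \<le>o |M|" using ordLeq_M[OF inf MM MM] .
  have b: "|{u. u \<subseteq> M \<and> finite u} \<times> (UNIV::nat set)| \<le>o |M|"
    using ordLeq_M[OF inf fin_subsets_le[OF inf]] inf infinite_iff_card_of_nat by blast
  have "|(M \<times> M) <+> ({u. u \<subseteq> M \<and> finite u} \<times> (UNIV::nat set))| \<le>o |M|"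
    using ordLeq_M_Plus[OF inf a b] .
  then show ?thesis using pow_times_le pow_le ordLeq_transitive by blast
qed


context wo begin

definition Bm :: "'a set \<Rightarrow> ('a set \<Rightarrow> nat) \<Rightarrow> nat \<Rightarrow> 'a \<Rightarrow> 'a \<Rightarrow> bool" where
"Bm X f n x = wfrec (r - Id) (\<lambda>h y. y \<in> X \<and> y \<prec> x \<and>
   (\<forall>s. s \<subseteq> {z. z \<prec> y \<and> h z} \<and> finite s \<and> card s \<le> n \<longrightarrow> f (insert y s) = f (insert x s)))"

lemma Bm_eq: "Bm X f n x y \<longleftrightarrow> y \<in> X \<and> y \<prec> x \<and>
   (\<forall>s. s \<subseteq> {z. z \<prec> y \<and> Bm X f n x z} \<and> finite s \<and> card s \<le> n \<longrightarrow> f (insert y s) = f (insert x s))"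
proof -
  define H where "H = (\<lambda>h y. y \<in> X \<and> y \<prec> x \<and>
   (\<forall>s. s \<subseteq> {z. z \<prec> y \<and> h z} \<and> finite s \<and> card s \<le> n \<longrightarrow> f (insert y s) = f (insert x s)))"
  have 1: "Bm X f n x y = H (cut (Bm X f n x) (r - Id) y) y"
    unfolding Bm_def H_def[symmetric] by (rule wfrec[OF rwf])
  have "{z. z \<prec> y \<and> cut (Bm X f n x) (r - Id) y z} = {z. z \<prec> y \<and> Bm X f n x z}"
    by (rule Collect_cong) (metis cut_apply ltwf)
  then show ?thesis unfolding 1 H_def by simp
qed

lemma Bm_D: "Bm X f n x y \<Longrightarrow> y \<in> X \<and> y \<prec> x" using Bm_eq by blast

lemma Bsub: assumes "Bm X f n x y" shows "z \<prec> y \<Longrightarrow> Bm X f n y z \<longleftrightarrow> Bm X f n x z"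
proof (induction z rule: lt_induct)
  case (1 z)
  have yx: "y \<prec> x" using Bm_D[OF assms] by blast
  have Q: "{w. w \<prec> z \<and> Bm X f n y w} = {w. w \<prec> z \<and> Bm X f n x w}"
    using 1 lt_trans by blast
  have hy: "\<forall>s. s \<subseteq> {w. w \<prec> y \<and> Bm X f n x w} \<and> finite s \<and> card s \<le> n \<longrightarrow> f (insert y s) = f (insert x s)"
    using assms Bm_eq by blast
  have "{w. w \<prec> z \<and> Bm X f n x w} \<subseteq> {w. w \<prec> y \<and> Bm X f n x w}" using 1(2) lt_trans by blast
  then have "\<forall>s. s \<subseteq> {w. w \<prec> z \<and> Bm X f n x w} \<and> finite s \<and> card s \<le> n \<longrightarrow> f (insert y s) = f (insert x s)"
    using hy by blast
  then show ?case
    apply (subst Bm_eq) apply (subst (2) Bm_eq)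
    using Q 1(2) yx lt_trans by (smt (verit, ccfv_threshold))
qed

lemma Binj:
  assumes "y \<in> X" "y' \<in> X" "{z. Bm X f n y z} = {z. Bm X f n y' z}"
    and "\<forall>s. s \<subseteq> {z. Bm X f n y z} \<and> finite s \<and> card s \<le> n \<longrightarrow> f (insert y s) = f (insert y' s)"
  shows "y = y'"
proof (rule ccontr)
  assume ne: "y \<noteq> y'"
  have key: "Bm X f n b a" if ab: "a \<prec> b" "a \<in> X" "{z. Bm X f n a z} = {z. Bm X f n b z}"
    and fe: "\<forall>s. s \<subseteq> {z. Bm X f n a z} \<and> finite s \<and> card s \<le> n \<longrightarrow> f (insert a s) = f (insert b s)" for a b
  proof -
    have "{z. z \<prec> a \<and> Bm X f n b z} = {z. Bm X f n a z}" using ab(3) Bm_D by blast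
    then show ?thesis using ab fe by (subst Bm_eq) auto
  qed
  show False
  proof (cases "y \<prec> y'")
    case True
    then have "Bm X f n y' y" using key[of y y'] assms by blast
    then have "Bm X f n y y" using assms(3) by blast
    then show False using Bm_D lt_irrefl by blast
  next
    case False
    then have "y' \<prec> y" using ne lt_linear by blast
    moreover have "\<forall>s. s \<subseteq> {z. Bm X f n y' z} \<and> finite s \<and> card s \<le> n \<longrightarrow> f (insert y' s) = f (insert y s)"
      using assms(3,4) by auto
    ultimately have "Bm X f n y y'" using key[of y' y] assms by blast
    then have "Bm X f n y' y'" using assms(3) by blast
    then show False using Bm_D lt_irrefl by blast
  qed
qed

lemma Bset_D: assumes "y \<in> insert x {z. Bm X f n x z}"
  shows "{z. Bm X f n y z} = {z \<in> insert x {z. Bm X f n x z}. z \<prec> y}"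
proof (cases "y = x")
  case True then show ?thesis using Bm_D lt_irrefl by blast
next
  case False
  then have b: "Bm X f n x y" using assms by auto
  then have "y \<prec> x" using Bm_D by blast
  then show ?thesis using Bsub[OF b] Bm_D lt_asym by blast
qed

end


context wo begin

lemma long_branch:
  assumes inf: "\<not> finite M" and Ble: "\<forall>x\<in>X. |{y. Bm X f n x y}| \<le>o |M|"
  shows "|X| \<le>o |Pow M|"
proof -
  define B where "B x = {y. Bm X f n x y}" for x
  define D where "D x = insert x (B x)" for x
  have DX: "x \<in> X \<Longrightarrow> D x \<subseteq> X" for x using Bm_D by (auto simp: D_def B_def)
  have Dle: "x \<in> X \<Longrightarrow> |D x| \<le>o |M|" for x
  proof -
    assume x: "x \<in> X"
    have "D x = B x \<union> {x}" by (auto simp: D_def)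
    moreover have "|{x}| \<le>o |M|" using inf card_of_singl_ordLeq by (metis finite.emptyI)
    moreover have "|B x| \<le>o |M|" using Ble x by (simp add: B_def)
    ultimately show ?thesis using ordLeq_M_Un[OF inf, of "B x" "{x}"] by simp
  qed
  have "\<forall>x\<in>X. \<exists>g. inj_on g (D x) \<and> g ` D x \<subseteq> M" using Dle card_of_ordLeq by metis
  then obtain e where e: "\<And>x. x \<in> X \<Longrightarrow> inj_on (e x) (D x) \<and> e x ` D x \<subseteq> M" by metis
  define R where "R x = {(e x a, e x b) | a b. a \<in> D x \<and> b \<in> D x \<and> (a,b) \<in> r}" for x
  define G where "G x = {(e x ` s, f s) | s. s \<subseteq> D x \<and> finite s}" for x
  define code where "code x = (R x, G x)" for x
  have img: "x \<in> X \<Longrightarrow> e x ` D x = {m. (m,m) \<in> R x}" for x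
    unfolding R_def using rrefl by fastforce
  have "inj_on code X"
  proof (rule inj_onI)
    fix x x' assume x: "x \<in> X" and x': "x' \<in> X" and cd: "code x = code x'"
    then have RR: "R x = R x'" and GG: "G x = G x'" by (auto simp: code_def)
    let ?e1 = "e x" and ?e2 = "e x'" and ?D1 = "D x" and ?D2 = "D x'"
    have inj1: "inj_on ?e1 ?D1" and inj2: "inj_on ?e2 ?D2" using e x x' by auto
    have imgeq: "?e1 ` ?D1 = ?e2 ` ?D2" using img x x' RR by auto
    define ph where "ph a = inv_into ?D2 ?e2 (?e1 a)" for a
    have ph1: "a \<in> ?D1 \<Longrightarrow> ph a \<in> ?D2 \<and> ?e2 (ph a) = ?e1 a" for a
      unfolding ph_def using imgeq by (metis f_inv_into_f image_eqI inv_into_into)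
    have phu: "a \<in> ?D1 \<Longrightarrow> b \<in> ?D2 \<Longrightarrow> ?e2 b = ?e1 a \<Longrightarrow> b = ph a" for a b
      using ph1 inj2 by (metis inj_onD)
    have phinj: "a \<in> ?D1 \<Longrightarrow> b \<in> ?D1 \<Longrightarrow> ph a = ph b \<Longrightarrow> a = b" for a b
      using ph1 inj1 by (metis inj_onD)
    have phsurj: "b \<in> ?D2 \<Longrightarrow> \<exists>a\<in>?D1. ph a = b" for b
      using imgeq phu by (metis image_iff)
    have ord: "a \<in> ?D1 \<Longrightarrow> b \<in> ?D1 \<Longrightarrow> (a,b) \<in> r \<longleftrightarrow> (ph a, ph b) \<in> r" for a b
    proof
      assume a: "a \<in> ?D1" "b \<in> ?D1" "(a,b) \<in> r"
      then have "(?e1 a, ?e1 b) \<in> R x" unfolding R_def by blast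
      then have "(?e1 a, ?e1 b) \<in> R x'" using RR by simp
      then obtain a2 b2 where "a2 \<in> ?D2" "b2 \<in> ?D2" "(a2,b2) \<in> r" "?e2 a2 = ?e1 a" "?e2 b2 = ?e1 b"
        by (auto simp: R_def)
      then show "(ph a, ph b) \<in> r" using phu a by metis
    next
      assume a: "a \<in> ?D1" "b \<in> ?D1" "(ph a, ph b) \<in> r"
      then have "(?e2 (ph a), ?e2 (ph b)) \<in> R x'" using ph1 unfolding R_def by blast
      then have "(?e2 (ph a), ?e2 (ph b)) \<in> R x" using RR by simp
      then obtain a1 b1 where "a1 \<in> ?D1" "b1 \<in> ?D1" "(a1,b1) \<in> r" "?e1 a1 = ?e2 (ph a)" "?e1 b1 = ?e2 (ph b)"
        by (auto simp: R_def)
      then show "(a, b) \<in> r" using ph1 a inj1 by (metis inj_onD)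
    qed
    have ordlt: "a \<in> ?D1 \<Longrightarrow> b \<in> ?D1 \<Longrightarrow> a \<prec> b \<longleftrightarrow> ph a \<prec> ph b" for a b
      using ord phinj by (auto simp: lt_def)
    have fpres: "s \<subseteq> ?D1 \<Longrightarrow> finite s \<Longrightarrow> f s = f (ph ` s)" for s
    proof -
      assume s: "s \<subseteq> ?D1" "finite s"
      then have "(?e1 ` s, f s) \<in> G x" unfolding G_def by blast
      then have "(?e1 ` s, f s) \<in> G x'" using GG by simp
      then obtain s2 where s2: "s2 \<subseteq> ?D2" "(?e1 ` s, f s) = (?e2 ` s2, f s2)" unfolding G_def by blast
      have "?e2 ` (ph ` s) = (\<lambda>a. ?e2 (ph a)) ` s" by (simp add: image_image)
      also have "\<dots> = ?e1 ` s" by (rule image_cong) (use ph1 s in auto)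
      finally have i1: "?e2 ` (ph ` s) = ?e1 ` s" .
      have i2: "ph ` s \<subseteq> ?D2" using ph1 s(1) by blast
      have "?e2 ` s2 = ?e2 ` (ph ` s)" using s2(2) i1 by (metis prod.inject)
      then have "s2 = ph ` s" using inj_on_image_eq_iff[OF inj2 s2(1) i2] by blast
      then show ?thesis using s2(2) by (metis prod.inject)
    qed
    have xD: "\<And>z. z \<in> D x \<Longrightarrow> z = x \<or> z \<prec> x" "x \<in> D x" using Bm_D by (auto simp: D_def B_def)
    have xD': "\<And>z. z \<in> D x' \<Longrightarrow> z = x' \<or> z \<prec> x'" "x' \<in> D x'" using Bm_D by (auto simp: D_def B_def)
    have phx: "ph x = x'"
    proof -
      obtain a where a: "a \<in> ?D1" "ph a = x'" using phsurj xD' by blast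
      have "(a, x) \<in> r" using xD(1)[OF a(1)] rrefl lt_r by blast
      then have "(x', ph x) \<in> r" using ord a xD(2) by metis
      moreover have "(ph x, x') \<in> r" using xD'(1) ph1 xD(2) rrefl lt_r by metis
      ultimately show ?thesis using rantisym by blast
    qed
    have BD: "y \<in> D z \<Longrightarrow> B y = {w \<in> D z. w \<prec> y}" for y z
      using Bset_D unfolding D_def B_def by blast
    have claim: "y \<in> ?D1 \<longrightarrow> ph y = y" for y
    proof (induction y rule: lt_induct)
      case (1 y)
      show ?case
      proof
        assume y: "y \<in> ?D1"
        define y' where "y' = ph y"
        have y': "y' \<in> ?D2" using ph1 y y'_def by auto
        have "B y' = {w \<in> ?D2. w \<prec> y'}" using BD y' by blast
        also have "\<dots> = ph ` {w \<in> ?D1. w \<prec> y}"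
        proof
          show "{w \<in> ?D2. w \<prec> y'} \<subseteq> ph ` {w \<in> ?D1. w \<prec> y}"
          proof
            fix w assume w: "w \<in> {w \<in> ?D2. w \<prec> y'}"
            then obtain a where "a \<in> ?D1" "ph a = w" using phsurj by blast
            then show "w \<in> ph ` {w \<in> ?D1. w \<prec> y}" using ordlt y w y'_def by auto
          qed
          show "ph ` {w \<in> ?D1. w \<prec> y} \<subseteq> {w \<in> ?D2. w \<prec> y'}"
            using ordlt y y'_def ph1 by auto
        qed
        also have "\<dots> = {w \<in> ?D1. w \<prec> y}" using 1 by force
        also have "\<dots> = B y" using BD y by blast
        finally have Beq: "B y = B y'" by simp
        have "\<forall>s. s \<subseteq> B y \<and> finite s \<and> card s \<le> n \<longrightarrow> f (insert y s) = f (insert y' s)"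
        proof (intro allI impI)
          fix s assume s: "s \<subseteq> B y \<and> finite s \<and> card s \<le> n"
          then have sD: "s \<subseteq> {w \<in> ?D1. w \<prec> y}" using BD y by blast
          then have e1: "ph ` s = s" using 1 by force
          have e2: "insert y s \<subseteq> ?D1" using sD y by auto
          have e3: "ph ` insert y s = insert y' s" using e1 y'_def by simp
          have "finite (insert y s)" using s by simp
          then have "f (insert y s) = f (ph ` insert y s)" using fpres[OF e2] by blast
          then show "f (insert y s) = f (insert y' s)" using e3 by simp
        qed
        then have c2: "\<forall>s. s \<subseteq> {z. Bm X f n y z} \<and> finite s \<and> card s \<le> n \<longrightarrow> f (insert y s) = f (insert y' s)"
          unfolding B_def .
        have c1: "{z. Bm X f n y z} = {z. Bm X f n y' z}" using Beq unfolding B_def .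
        have yX: "y \<in> X" using DX[OF x] y by blast
        have y'X: "y' \<in> X" using DX[OF x'] y' by blast
        have "y = y'" using Binj[OF yX y'X c1 c2] .
        then show "ph y = y" using y'_def by simp
      qed
    qed
    show "x = x'" using claim[of x] xD(2) phx by simp
  qed
  moreover have "code ` X \<subseteq> Pow (M \<times> M) \<times> Pow ({u. u \<subseteq> M \<and> finite u} \<times> (UNIV::nat set))"
  proof
    fix c assume "c \<in> code ` X"
    then obtain x where x: "x \<in> X" "c = code x" by blast
    have "R x \<subseteq> M \<times> M" unfolding R_def using e[OF x(1)] by blast
    moreover have "G x \<subseteq> {u. u \<subseteq> M \<and> finite u} \<times> (UNIV::nat set)"
    proof
      fix p assume "p \<in> G x"
      then obtain s where "p = (e x ` s, f s)" "s \<subseteq> D x" "finite s" unfolding G_def by blast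
      then show "p \<in> {u. u \<subseteq> M \<and> finite u} \<times> (UNIV::nat set)" using e[OF x(1)] by auto
    qed
    ultimately show "c \<in> Pow (M \<times> M) \<times> Pow ({u. u \<subseteq> M \<and> finite u} \<times> (UNIV::nat set))"
      using x(2) by (simp add: code_def)
  qed
  ultimately have "|X| \<le>o |Pow (M \<times> M) \<times> Pow ({u. u \<subseteq> M \<and> finite u} \<times> (UNIV::nat set))|"
    unfolding card_of_ordLeq[symmetric] by blast
  then show ?thesis by (rule ordLeq_transitive[OF _ code_space_le[OF inf]])
qed

end



lemma S_inf: assumes S0: "|S 0| =o |UNIV::nat set|" and SS: "\<forall>m. |S (Suc m)| =o |Pow (S m)|"
  shows "\<not> finite (S m)"
proof (induction m)
  case 0 then show ?case using card_of_ordIso_finite[OF S0] by simp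
next
  case (Suc m)
  have "|S m| <o |S (Suc m)|" using ordLess_ordIso_trans[OF card_of_Pow[of "S m"] ordIso_symmetric[OF SS[rule_format, of m]]] .
  then have "|S m| \<le>o |S (Suc m)|" by (rule ordLess_imp_ordLeq)
  then show ?case using Suc card_of_ordLeq_infinite by blast
qed

context wo begin

definition gd :: "(nat \<Rightarrow> 'a) \<Rightarrow> 'a set \<Rightarrow> nat \<Rightarrow> 'a set \<Rightarrow> bool" where
"gd s T L H \<longleftrightarrow> (\<forall>i j. i < j \<longrightarrow> s i \<prec> s j) \<and> finite T \<and> card T = L \<and>
    (\<forall>i. \<forall>t\<in>T. s i \<prec> t) \<and> H = range s \<union> T"

definition goodset :: "nat \<Rightarrow> 'a set \<Rightarrow> 'a set \<Rightarrow> bool" where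
"goodset L X H \<longleftrightarrow> (\<exists>s T. gd s T L H \<and> H \<subseteq> X)"

lemma goodset_mono: "goodset L Y H \<Longrightarrow> Y \<subseteq> X \<Longrightarrow> goodset L X H"
  unfolding goodset_def by blast

lemma goodset_base: assumes unc: "|UNIV::nat set| <o |X|" shows "\<exists>H. goodset L X H"
proof -
  define P where "P x = {y \<in> X. y \<prec> x}" for x
  define C where "C = {x \<in> X. infinite (P x)}"
  have injP: "inj_on (\<lambda>x. card (P x)) (X - C)"
  proof (rule inj_onI)
    fix x x' assume x: "x \<in> X - C" and x': "x' \<in> X - C" and eq: "card (P x) = card (P x')"
    have lt: "card (P a) < card (P b)" if "a \<in> X - C" "b \<in> X - C" "a \<prec> b" for a b
    proof -
      have "P a \<subseteq> P b" using that lt_trans by (auto simp: P_def)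
      moreover have "a \<in> P b - P a" using that lt_irrefl by (auto simp: P_def)
      ultimately have "P a \<subset> P b" by blast
      moreover have "finite (P b)" using that by (auto simp: C_def)
      ultimately show ?thesis by (rule psubset_card_mono[rotated])
    qed
    show "x = x'" using lt[OF x x'] lt[OF x' x] eq lt_linear by force
  qed
  have Cinf: "infinite C"
  proof
    assume fin: "finite C"
    have infn: "\<not> finite (UNIV::nat set)" by simp
    have a: "|X - C| \<le>o |UNIV::nat set|" using injP card_of_ordLeq by blast
    obtain g :: "'a \<Rightarrow> nat" where "inj_on g C" using finite_imp_inj_to_nat_seg[OF fin] by blast
    then have b: "|C| \<le>o |UNIV::nat set|" unfolding card_of_ordLeq[symmetric] by blast
    have "|(X - C) \<union> C| \<le>o |UNIV::nat set|" using ordLeq_M_Un[OF infn a b] .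
    moreover have "(X - C) \<union> C = X" by (auto simp: C_def)
    ultimately show False using unc not_ordLess_ordLeq by metis
  qed
  then obtain c0 where "c0 \<in> C" by (metis finite.emptyI ex_in_conv)
  then obtain c where c: "c \<in> C" "\<forall>b\<in>C. \<not> b \<prec> c" using ex_min by blast
  obtain T where T: "finite T" "card T = L" "T \<subseteq> C" using infinite_arbitrarily_large[OF Cinf] by blast
  define I where "I = P c"
  have Iinf: "infinite I" using c by (auto simp: C_def I_def)
  have Ifin: "y \<in> I \<Longrightarrow> finite (P y)" for y
    using c by (auto simp: C_def I_def P_def)
  have up: "p \<in> I \<Longrightarrow> \<exists>a. a \<in> I \<and> p \<prec> a" for p
  proof -
    assume p: "p \<in> I"
    have IX: "I \<subseteq> X" unfolding I_def P_def by blast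
    have "{b \<in> I. \<not> p \<prec> b} \<subseteq> insert p (P p)"
    proof
      fix b assume b: "b \<in> {b \<in> I. \<not> p \<prec> b}"
      then have "b = p \<or> b \<prec> p" using lt_not by blast
      then show "b \<in> insert p (P p)" using b IX unfolding P_def by blast
    qed
    then have fin: "finite {b \<in> I. \<not> p \<prec> b}" using Ifin[OF p] finite_subset by blast
    show ?thesis
    proof (rule ccontr)
      assume "\<not> ?thesis"
      then have "I \<subseteq> {b \<in> I. \<not> p \<prec> b}" by blast
      then show False using fin Iinf finite_subset by blast
    qed
  qed
  obtain a0 where a0: "a0 \<in> I" using Iinf by (metis finite.emptyI ex_in_conv)
  define s where "s = rec_nat a0 (\<lambda>_ p. SOME a. a \<in> I \<and> p \<prec> a)"
  have sI: "s i \<in> I" for i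
  proof (induction i)
    case 0 then show ?case using a0 by (simp add: s_def)
  next
    case (Suc i) then show ?case using up someI_ex[OF up[OF Suc]] by (simp add: s_def)
  qed
  have sS: "s i \<prec> s (Suc i)" for i using someI_ex[OF up[OF sI[of i]]] by (simp add: s_def)
  have smono: "i < j \<Longrightarrow> s i \<prec> s j" for i j
  proof (induction j)
    case (Suc j) then show ?case using sS lt_trans less_Suc_eq by metis
  qed simp
  have sT: "s i \<prec> t" if "t \<in> T" for i t
  proof -
    have "s i \<prec> c" using sI[of i] by (simp add: I_def P_def)
    moreover have "t = c \<or> c \<prec> t" using c T(3) that lt_not by blast
    ultimately show ?thesis using lt_trans by blast
  qed
  have "range s \<union> T \<subseteq> X" using sI T(3) by (auto simp: I_def P_def C_def)
  moreover have "gd s T L (range s \<union> T)" unfolding gd_def using smono T sT by blast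
  ultimately show ?thesis unfolding goodset_def by blast
qed

lemma ER:
  fixes f :: "'a set \<Rightarrow> nat"
  assumes S0: "|S 0| =o |UNIV::nat set|" and SS: "\<forall>m. |S (Suc m)| =o |Pow (S m)|"
  shows "|S n| <o |X| \<Longrightarrow> \<exists>H. goodset L X H \<and> (\<exists>C. \<forall>u \<subseteq> H. finite u \<and> card u \<le> n \<longrightarrow> f u = C (card u))"
proof (induction n arbitrary: X f)
  case 0
  then have "|UNIV::nat set| <o |X|" using ordIso_ordLess_trans[OF ordIso_symmetric[OF S0]] by blast
  then obtain H where H: "goodset L X H" using goodset_base by blast
  have C: "\<forall>u \<subseteq> H. finite u \<and> card u \<le> 0 \<longrightarrow> f u = (\<lambda>_. f {}) (card u)"
  proof (intro allI impI)
    fix u assume "u \<subseteq> H" "finite u \<and> card u \<le> 0"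
    then have "u = {}" using card_0_eq by blast
    then show "f u = (\<lambda>_. f {}) (card u)" by simp
  qed
  show ?case by (rule exI[of _ H], rule conjI[OF H], rule exI[of _ "\<lambda>_. f {}"], rule C)
next
  case (Suc n)
  have inf: "\<not> finite (S n)" using S_inf[OF S0 SS] .
  have "\<exists>x\<in>X. \<not> |{y. Bm X f n x y}| \<le>o |S n|"
  proof (rule ccontr)
    assume "\<not> ?thesis"
    then have "\<forall>x\<in>X. |{y. Bm X f n x y}| \<le>o |S n|" by blast
    then have "|X| \<le>o |Pow (S n)|" by (rule long_branch[OF inf])
    also have "|Pow (S n)| =o |S (Suc n)|" using ordIso_symmetric[OF SS[rule_format, of n]] .
    finally have "|X| \<le>o |S (Suc n)|" .
    then show False using not_ordLess_ordLeq[OF Suc.prems] by blast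
  qed
  then obtain x where x: "x \<in> X" and nb: "\<not> |{y. Bm X f n x y}| \<le>o |S n|" by blast
  have big: "|S n| <o |{y. Bm X f n x y}|"
    using nb not_ordLeq_iff_ordLess[OF card_of_Well_order card_of_Well_order] by blast
  obtain H C' where H: "goodset L {y. Bm X f n x y} H"
    and C': "\<forall>u \<subseteq> H. finite u \<and> card u \<le> n \<longrightarrow> f (insert x u) = C' (card u)"
    using Suc.IH[OF big, of "\<lambda>s. f (insert x s)"] by auto
  have HB: "H \<subseteq> {y. Bm X f n x y}" using H unfolding goodset_def by auto
  have "{y. Bm X f n x y} \<subseteq> X" using Bm_D by blast
  then have "goodset L X H" using goodset_mono[OF H] by blast
  moreover have "\<forall>u \<subseteq> H. finite u \<and> card u \<le> Suc n \<longrightarrow> f u = (\<lambda>j. if j = 0 then f {} else C' (j - 1)) (card u)"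
  proof (intro allI impI)
    fix u assume u0: "u \<subseteq> H" and u1: "finite u \<and> card u \<le> Suc n"
    have u: "u \<subseteq> H \<and> finite u \<and> card u \<le> Suc n" using u0 u1 by blast
    show "f u = (\<lambda>j. if j = 0 then f {} else C' (j - 1)) (card u)"
    proof (cases "u = {}")
      case True then show ?thesis by simp
    next
      case False
      obtain y where y: "y \<in> u" "\<forall>b\<in>u. b \<noteq> y \<longrightarrow> b \<prec> y" using ex_max[of u] u False by blast
      define s where "s = u - {y}"
      have uy: "u = insert y s" using y by (auto simp: s_def)
      have cs: "card s = card u - 1" using u y by (simp add: s_def)
      have By: "Bm X f n x y" using y u HB by blast
      note BB = iffD1[OF Bm_eq By]
      have s1: "s \<subseteq> {z. z \<prec> y \<and> Bm X f n x z}" using y u HB by (auto simp: s_def)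
      have s2: "finite s" "card s \<le> n" using u cs by (auto simp: s_def)
      have sH: "s \<subseteq> H" using u0 by (auto simp: s_def)
      have e1: "f (insert y s) = f (insert x s)" using BB s1 s2 by blast
      have e2: "f (insert x s) = C' (card s)" using C' sH s2 by blast
      have cu: "card u \<noteq> 0" using False u by simp
      show ?thesis using e1 e2 uy cs cu by simp
    qed
  qed
  ultimately show ?case by (intro exI conjI) 
qed

end


context wo begin

definition vec :: "nat \<Rightarrow> 'a set \<Rightarrow> 'a \<Rightarrow>\<^sub>0 rat" where
"vec k u = Abs_poly_mapping (\<lambda>z. if z \<in> u then (if card {w \<in> u. w \<prec> z} < 2 * (card u - k) then 1 else 2) else 0)"

lemma vec_lookup: assumes "finite u"
  shows "Poly_Mapping.lookup (vec k u) = (\<lambda>z. if z \<in> u then (if card {w \<in> u. w \<prec> z} < 2 * (card u - k) then 1 else 2) else (0::rat))"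
proof -
  have "{z. (if z \<in> u then (if card {w \<in> u. w \<prec> z} < 2 * (card u - k) then 1 else 2) else 0) \<noteq> (0::rat)} \<subseteq> u"
    by auto
  then have fin: "finite {z. (if z \<in> u then (if card {w \<in> u. w \<prec> z} < 2 * (card u - k) then 1 else 2) else 0) \<noteq> (0::rat)}"
    using finite_subset assms by blast
  show ?thesis unfolding vec_def using lookup_Abs_poly_mapping[OF fin] .
qed

lemma vec_split:
  assumes fP: "finite P" and fQ: "finite Q" and dj: "P \<inter> Q = {}" and od: "\<forall>p\<in>P. \<forall>q\<in>Q. p \<prec> q"
    and cP: "card P = 2 * (card (P \<union> Q) - k)"
  shows "Poly_Mapping.lookup (vec k (P \<union> Q)) z = (if z \<in> P then 1 else if z \<in> Q then 2 else (0::rat))"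
proof -
  have fu: "finite (P \<union> Q)" using fP fQ by simp
  show ?thesis
  proof (cases "z \<in> P")
    case True
    have "{w \<in> P \<union> Q. w \<prec> z} \<subseteq> P - {z}" using True od lt_asym lt_irrefl by blast
    then have "card {w \<in> P \<union> Q. w \<prec> z} \<le> card (P - {z})" using fP by (intro card_mono) auto
    also have "\<dots> < card P" using card_Diff1_less[OF fP True] .
    finally show ?thesis using True cP by (simp add: vec_lookup[OF fu])
  next
    case False
    show ?thesis
    proof (cases "z \<in> Q")
      case True
      have "P \<subseteq> {w \<in> P \<union> Q. w \<prec> z}" using True od by blast
      then have "card P \<le> card {w \<in> P \<union> Q. w \<prec> z}" using fu by (intro card_mono) auto
      then show ?thesis using True False cP by (simp add: vec_lookup[OF fu])
    next
      case False2: False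
      then show ?thesis using False by (simp add: vec_lookup[OF fu])
    qed
  qed
qed

end



theorem theorem2:
  fixes k :: nat
    and c :: "('a \<Rightarrow>\<^sub>0 rat) \<Rightarrow> nat"
  assumes "beth_omega_sized (UNIV :: 'a set)"
    and "0 < k"
    and "\<forall>v. c v < k"
  shows "\<exists>X :: ('a \<Rightarrow>\<^sub>0 rat) set. infinite X \<and>
           (\<exists>col. \<forall>x\<in>X. \<forall>y\<in>X. c (x + y) = col)"
proof -
  obtain r :: "'a rel" where r: "Well_order r" "Field r = UNIV" using well_ordering[where 'a='a] by (elim exE conjE)
  interpret W: wo r using r by (intro wo.intro)
  obtain S :: "nat \<Rightarrow> 'a set" where S0: "|S 0| =o |UNIV::nat set|"
    and SS: "\<forall>n. |S (Suc n)| =o |Pow (S n)|" using assms(1) unfolding beth_omega_sized_def by blast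
  have b1: "|S (2*k)| <o |S (Suc (2*k))|"
    using ordLess_ordIso_trans[OF card_of_Pow[of "S (2*k)"] ordIso_symmetric[OF SS[rule_format, of "2*k"]]] .
  have b2: "|S (Suc (2*k))| \<le>o |UNIV::'a set|" by (rule card_of_mono1) simp
  have big: "|S (2*k)| <o |UNIV::'a set|" using ordLess_ordLeq_trans[OF b1 b2] .
  define f where "f u = c (W.vec k u)" for u
  obtain H where H: "W.goodset k UNIV H" and
    C: "\<exists>C. \<forall>u \<subseteq> H. finite u \<and> card u \<le> 2*k \<longrightarrow> f u = C (card u)"
    using W.ER[OF S0 SS big, of k f] by blast
  obtain Cf where Cf: "\<forall>u \<subseteq> H. finite u \<and> card u \<le> 2*k \<longrightarrow> f u = Cf (card u)" using C by blast
  obtain s T where gd: "W.gd s T k H" using H unfolding W.goodset_def by blast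
  have smono: "\<And>i j. i < j \<Longrightarrow> W.lt (s i) (s j)" and fT: "finite T" and cT: "card T = k"
    and sT: "\<And>i t. t \<in> T \<Longrightarrow> W.lt (s i) t" and HH: "H = range s \<union> T"
    using gd unfolding W.gd_def by auto
  have sinj: "inj s"
  proof (rule injI)
    fix i j assume "s i = s j"
    then show "i = j" using smono W.lt_irrefl by (metis linorder_neqE_nat)
  qed
  have sTd: "s i \<notin> T" for i using sT W.lt_irrefl by blast
  have Cv: "Cf (k + a) < k" if "a \<le> k" for a
  proof -
    define u where "u = s ` {..<k+a}"
    have "finite u" "card u = k + a" using sinj by (auto simp: u_def card_image inj_on_subset)
    moreover have "u \<subseteq> H" using HH by (auto simp: u_def)
    ultimately have "f u = Cf (k + a)" using Cf that by auto
    then show ?thesis using assms(3) unfolding f_def by metis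
  qed
  have "\<not> inj_on (\<lambda>a. Cf (k + a)) {..k}"
  proof
    assume "inj_on (\<lambda>a. Cf (k + a)) {..k}"
    moreover have "(\<lambda>a. Cf (k + a)) ` {..k} \<subseteq> {..<k}" using Cv by auto
    ultimately have "card {..k} \<le> card {..<k}" using card_inj_on_le by blast
    then show False by simp
  qed
  then obtain a1 a2 where a12: "a1 \<le> k" "a2 \<le> k" "a1 \<noteq> a2" "Cf (k + a1) = Cf (k + a2)"
    unfolding inj_on_def by auto
  obtain a a' where aa: "a < a'" "a' \<le> k" "Cf (k + a) = Cf (k + a')"
  proof (cases "a1 < a2")
    case True then show ?thesis using that a12 by blast
  next
    case False then have "a2 < a1" using a12 by simp
    then show ?thesis using that a12 by (metis)
  qed
  define m where "m = a' - a"
  have m1: "1 \<le> m" using aa by (simp add: m_def)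
  obtain R2 where R2: "R2 \<subseteq> T" "card R2 = k - a'" "finite R2"
    using obtain_subset_with_card_n[of "k - a'" T] cT by auto
  define R1 where "R1 = s ` {..<2*a}"
  define J where "J i = {2*a + i*m ..< 2*a + i*m + m}" for i
  define Tl where "Tl i = s ` J i" for i
  define xv where "xv i = Abs_poly_mapping (\<lambda>z. if z \<in> R1 then 1/2 else if z \<in> R2 \<union> Tl i then 1 else (0::rat))" for i
  have fR1: "finite R1" "card R1 = 2*a" using sinj by (auto simp: R1_def card_image inj_on_subset)
  have fTl: "finite (Tl i)" "card (Tl i) = m" for i using sinj by (auto simp: Tl_def J_def card_image inj_on_subset)
  have Jdisj: "J i \<inter> J j = {}" if "i \<noteq> j" for i j
  proof -
    have *: "J i \<inter> J j = {}" if "i < j" for i j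
    proof -
      have "Suc i * m \<le> j * m" using that by (intro mult_le_mono1) simp
      then show ?thesis by (auto simp: J_def)
    qed
    show ?thesis using *[of i j] *[of j i] that by (metis inf_commute linorder_neqE_nat)
  qed
  have Tldisj: "Tl i \<inter> Tl j = {}" if "i \<noteq> j" for i j
    using Jdisj[OF that] sinj by (auto simp: Tl_def inj_eq)
  have R1Tl: "R1 \<inter> Tl i = {}" for i using sinj by (auto simp: R1_def Tl_def J_def inj_eq)
  have R2s: "R2 \<inter> range s = {}" using R2(1) sTd by blast
  have R2R1: "R2 \<inter> R1 = {}" and R2Tl: "R2 \<inter> Tl i = {}" for i
    using R2s by (auto simp: R1_def Tl_def)
  have ordR1Tl: "\<forall>p\<in>R1. \<forall>q\<in>Tl i. W.lt p q" for i
    using smono by (auto simp: R1_def Tl_def J_def)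
  have ordR2: "\<forall>p\<in>range s. \<forall>q\<in>R2. W.lt p q" using sT R2(1) by blast
  have R1s: "R1 \<subseteq> range s" and Tls: "Tl i \<subseteq> range s" for i by (auto simp: R1_def Tl_def)
  have lk: "Poly_Mapping.lookup (xv i) = (\<lambda>z. if z \<in> R1 then 1/2 else if z \<in> R2 \<union> Tl i then 1 else (0::rat))" for i
  proof -
    have "{z. (if z \<in> R1 then 1/2 else if z \<in> R2 \<union> Tl i then 1 else (0::rat)) \<noteq> 0} \<subseteq> R1 \<union> R2 \<union> Tl i" by auto
    then have fin: "finite {z. (if z \<in> R1 then 1/2 else if z \<in> R2 \<union> Tl i then 1 else (0::rat)) \<noteq> 0}"
      using fR1 fTl R2(3) finite_subset by blast
    show ?thesis unfolding xv_def using lookup_Abs_poly_mapping[OF fin] .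
  qed
  have same: "c (xv i + xv i) = Cf (k + a)" for i
  proof -
    let ?Q = "R2 \<union> Tl i"
    have fQ: "finite ?Q" using R2(3) fTl by simp
    have dj: "R1 \<inter> ?Q = {}" using R2R1 R1Tl by blast
    have od: "\<forall>p\<in>R1. \<forall>q\<in>?Q. W.lt p q" using ordR1Tl ordR2 R1s by blast
    have cu: "card (R1 \<union> ?Q) = k + a"
    proof -
      have "card ?Q = (k - a') + m" using card_Un_disjoint[OF R2(3) fTl(1) R2Tl] R2(2) fTl(2) by simp
      then have "card (R1 \<union> ?Q) = 2*a + (k - a') + m" using card_Un_disjoint[OF fR1(1) fQ dj] fR1(2) by simp
      then show ?thesis using aa by (simp add: m_def)
    qed
    have cP: "card R1 = 2 * (card (R1 \<union> ?Q) - k)" using cu fR1(2) by simp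
    have "xv i + xv i = W.vec k (R1 \<union> ?Q)"
    proof (rule poly_mapping_eqI)
      fix z
      show "Poly_Mapping.lookup (xv i + xv i) z = Poly_Mapping.lookup (W.vec k (R1 \<union> ?Q)) z"
        unfolding lookup_add W.vec_split[OF fR1(1) fQ dj od cP] lk by simp
    qed
    moreover have "R1 \<union> ?Q \<subseteq> H" using HH R1s Tls R2(1) by blast
    moreover have "finite (R1 \<union> ?Q)" using fR1 fQ by simp
    ultimately show ?thesis using Cf cu aa by (simp add: f_def)
  qed
  have diff: "c (xv i + xv j) = Cf (k + a')" if ij: "i \<noteq> j" for i j
  proof -
    let ?P = "R1 \<union> Tl i \<union> Tl j"
    have fP: "finite ?P" using fR1 fTl by simp
    have dj: "?P \<inter> R2 = {}" using R2R1 R2Tl by blast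
    have od: "\<forall>p\<in>?P. \<forall>q\<in>R2. W.lt p q" using ordR2 R1s Tls by blast
    have cPP: "card ?P = 2*a + 2*m"
    proof -
      have "card (Tl i \<union> Tl j) = m + m" using card_Un_disjoint[OF fTl(1) fTl(1) Tldisj[OF ij]] fTl(2) by simp
      moreover have "R1 \<inter> (Tl i \<union> Tl j) = {}" using R1Tl by blast
      ultimately have "card (R1 \<union> (Tl i \<union> Tl j)) = 2*a + (m + m)"
        using card_Un_disjoint[OF fR1(1), of "Tl i \<union> Tl j"] fTl fR1(2) by simp
      then show ?thesis by (simp add: Un_assoc)
    qed
    have cu: "card (?P \<union> R2) = k + a'"
    proof -
      have "card (?P \<union> R2) = 2*a + 2*m + (k - a')" using card_Un_disjoint[OF fP R2(3) dj] cPP R2(2) by simp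
      then show ?thesis using aa by (simp add: m_def)
    qed
    have cP: "card ?P = 2 * (card (?P \<union> R2) - k)" using cu cPP aa by (simp add: m_def)
    have "xv i + xv j = W.vec k (?P \<union> R2)"
    proof (rule poly_mapping_eqI)
      fix z
      have d1: "z \<in> Tl i \<Longrightarrow> z \<notin> Tl j" "z \<in> Tl j \<Longrightarrow> z \<notin> Tl i" using Tldisj[OF ij] by blast+
      have d2: "z \<in> R2 \<Longrightarrow> z \<notin> Tl i \<and> z \<notin> Tl j \<and> z \<notin> R1" using R2Tl R2R1 by blast
      show "Poly_Mapping.lookup (xv i + xv j) z = Poly_Mapping.lookup (W.vec k (?P \<union> R2)) z"
        unfolding lookup_add W.vec_split[OF fP R2(3) dj od cP] lk using d1 d2 by auto
    qed
    moreover have "?P \<union> R2 \<subseteq> H" using HH R1s Tls R2(1) by blast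
    moreover have "finite (?P \<union> R2)" using fP R2(3) by simp
    ultimately show ?thesis using Cf cu aa by (simp add: f_def)
  qed
  have xinj: "inj xv"
  proof (rule injI)
    fix i j assume eq: "xv i = xv j"
    show "i = j"
    proof (rule ccontr)
      assume ij: "i \<noteq> j"
      define z where "z = s (2*a + i*m)"
      have zi: "z \<in> Tl i" using m1 by (auto simp: z_def Tl_def J_def)
      have "z \<notin> Tl j" using zi Tldisj[OF ij] by blast
      moreover have "z \<notin> R1" using zi R1Tl by blast
      moreover have "z \<notin> R2" using zi R2Tl by blast
      ultimately have "Poly_Mapping.lookup (xv j) z = 0" "Poly_Mapping.lookup (xv i) z = 1"
        using zi \<open>z \<notin> R1\<close> by (simp_all add: lk)
      then show False using eq by simp
    qed
  qed
  have "infinite (range xv)" using xinj finite_imageD[of xv UNIV] by auto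
  moreover have "\<forall>x\<in>range xv. \<forall>y\<in>range xv. c (x + y) = Cf (k + a)"
  proof (intro ballI)
    fix x y assume "x \<in> range xv" "y \<in> range xv"
    then obtain i j where ij: "x = xv i" "y = xv j" by blast
    show "c (x + y) = Cf (k + a)"
    proof (cases "i = j")
      case True then show ?thesis using same[of i] ij by simp
    next
      case False then show ?thesis using diff[OF False] ij aa(3) by simp
    qed
  qed
  ultimately show ?thesis by blast
qed



end
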